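(* Let $G=(V,E)$ be a finite graph with special vertex $i$, symmetric edge weights $w_E$ (with $w_E(u,v)=0$ for $uv\notin E$) and vertex weights $w_V$ (nonnegative, not identically zero). Assume $G$ and $G-i$ are each positively connected. Let $f_i$ be a solution of $$\min_{\|g\|_w=1,\ g(i)=0}\ \sum_{jk\in E} w_E(j,k)\,(g(k)-g(j))^2,$$ with sign chosen so that $f_i$ is positive on $V\setminus\{i\}$. Then for every $u\in V\setminus\{i\}$ there exists $u'\in N(u)$ (possibly $u'=i$) with $f_i(u')\le f_i(u)$. Moreover, if $w_V(u)>0$, such $u'$ can be chosen with $f_i(u')<f_i(u)$.
   Context: $\|g\|_w=\sqrt{\sum_{u\in V}w_V(u)g(u)^2}$; each edge is counted once. A weighted graph is positively connected if any two vertices are joined by a path of positive-weight edges; $G-i$ is $G$ with $i$ deleted. Edges of weight zero are regarded as deleted (they do not affect the optimization problem), so $N(u)$ is the set of vertices joined to $u$ by an edge of positive weight. A solution that is positive at some vertex is positive on all of $V\setminus\{i\}$, and the paper always takes this sign. *)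

theory Defs
  imports Complex_Main
begin

text \<open>Weighted graph on a finite vertex set V; edge weights are a function
  wE :: 'a => 'a => real (weight 0 = no edge).\<close>

definition pos_edges :: "'a set \<Rightarrow> ('a \<Rightarrow> 'a \<Rightarrow> real) \<Rightarrow> ('a \<times> 'a) set" where
  "pos_edges V wE = {(x, y). x \<in> V \<and> y \<in> V \<and> wE x y > 0}"

definition pos_connected :: "'a set \<Rightarrow> ('a \<Rightarrow> 'a \<Rightarrow> real) \<Rightarrow> bool" where
  "pos_connected V wE \<longleftrightarrow> (\<forall>a\<in>V. \<forall>b\<in>V. (a, b) \<in> (pos_edges V wE)\<^sup>*)"

definition nbrs :: "'a set \<Rightarrow> ('a \<Rightarrow> 'a \<Rightarrow> real) \<Rightarrow> 'a \<Rightarrow> 'a set" where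
  "nbrs V wE u = {v \<in> V. wE u v > 0}"

definition wnorm :: "'a set \<Rightarrow> ('a \<Rightarrow> real) \<Rightarrow> ('a \<Rightarrow> real) \<Rightarrow> real" where
  "wnorm V wV g = sqrt (\<Sum>u\<in>V. wV u * (g u)\<^sup>2)"

text \<open>Dirichlet energy, each edge counted once (ordered double sum halved;
  weights are symmetric).\<close>
definition energy :: "'a set \<Rightarrow> ('a \<Rightarrow> 'a \<Rightarrow> real) \<Rightarrow> ('a \<Rightarrow> real) \<Rightarrow> real" where
  "energy V wE g = (1/2) * (\<Sum>j\<in>V. \<Sum>k\<in>V. wE j k * (g k - g j)\<^sup>2)"

definition admissible :: "'a set \<Rightarrow> ('a \<Rightarrow> real) \<Rightarrow> 'a \<Rightarrow> ('a \<Rightarrow> real) \<Rightarrow> bool" where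
  "admissible V wV i g \<longleftrightarrow> wnorm V wV g = 1 \<and> g i = 0"

definition is_solution ::
  "'a set \<Rightarrow> ('a \<Rightarrow> 'a \<Rightarrow> real) \<Rightarrow> ('a \<Rightarrow> real) \<Rightarrow> 'a \<Rightarrow> ('a \<Rightarrow> real) \<Rightarrow> bool" where
  "is_solution V wE wV i f \<longleftrightarrow> admissible V wV i f \<and>
     (\<forall>g. admissible V wV i g \<longrightarrow> energy V wE f \<le> energy V wE g)"

end

theory Submission
  imports Defs
begin

lemma energy_scale:
  assumes "N > 0"
  shows "energy V wE (\<lambda>w. g w / sqrt N) = energy V wE g / N"
proof -
  have "\<And>j k. wE j k * (g k / sqrt N - g j / sqrt N)\<^sup>2 = wE j k * (g k - g j)\<^sup>2 / N"
    using assms by (simp add: diff_divide_distrib[symmetric] power_divide)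
  then show ?thesis unfolding energy_def
    by (simp add: sum_divide_distrib mult.commute)
qed

lemma wnorm_scale:
  assumes "N > 0" "(\<Sum>w\<in>V. wV w * (g w)\<^sup>2) = N"
  shows "wnorm V wV (\<lambda>w. g w / sqrt N) = 1"
proof -
  have "\<And>w. wV w * (g w / sqrt N)\<^sup>2 = wV w * (g w)\<^sup>2 / N"
    using assms by (simp add: power_divide)
  then have "(\<Sum>w\<in>V. wV w * (g w / sqrt N)\<^sup>2) = N / N"
    using assms by (simp add: sum_divide_distrib[symmetric])
  then show ?thesis using assms unfolding wnorm_def by simp
qed

lemma norm_upd:
  fixes f wV :: "'a \<Rightarrow> real"
  assumes "finite V" "u \<in> V"
  shows "(\<Sum>w\<in>V. wV w * ((f(u := f u + t)) w)\<^sup>2)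
       = (\<Sum>w\<in>V. wV w * (f w)\<^sup>2) + wV u * (2 * f u * t + t\<^sup>2)"
proof -
  have "(\<Sum>w\<in>V. wV w * ((f(u := f u + t)) w)\<^sup>2)
      = (\<Sum>w\<in>V. wV w * (f w)\<^sup>2 + (if w = u then wV u * (2 * f u * t + t\<^sup>2) else 0))"
    by (rule sum.cong) (auto simp: power2_eq_square algebra_simps)
  also have "\<dots> = (\<Sum>w\<in>V. wV w * (f w)\<^sup>2) + wV u * (2 * f u * t + t\<^sup>2)"
    using assms by (simp add: sum.distrib)
  finally show ?thesis .
qed

lemma energy_upd:
  assumes "finite V" "u \<in> V" and sym: "\<And>x y. wE x y = wE y x" and nl: "wE u u = 0"
  shows "energy V wE (f(u := f u + t))
       = energy V wE f + (\<Sum>v\<in>V. wE u v) * t\<^sup>2 - 2 * (\<Sum>v\<in>V. wE u v * (f v - f u)) * t"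
proof -
  define g where "g = f(u := f u + t)"
  define Q where "Q v = wE u v * ((f v - f u - t)\<^sup>2 - (f v - f u)\<^sup>2)" for v
  have D: "wE j k * (g k - g j)\<^sup>2 = wE j k * (f k - f j)\<^sup>2
        + ((if j = u then Q k else 0) + (if k = u then Q j else 0))" for j k
    unfolding g_def Q_def using nl sym[of j u]
    by (cases "j = u"; cases "k = u") (auto simp: power2_eq_square algebra_simps)
  have "(\<Sum>j\<in>V. \<Sum>k\<in>V. wE j k * (g k - g j)\<^sup>2)
      = (\<Sum>j\<in>V. \<Sum>k\<in>V. wE j k * (f k - f j)\<^sup>2)
        + (\<Sum>j\<in>V. \<Sum>k\<in>V. ((if j = u then Q k else 0) + (if k = u then Q j else 0)))"
    unfolding D by (simp add: sum.distrib)
  also have "(\<Sum>j\<in>V. \<Sum>k\<in>V. ((if j = u then Q k else 0) + (if k = u then Q j else 0)))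
      = 2 * (\<Sum>v\<in>V. Q v)"
  proof -
    have "(\<Sum>j\<in>V. \<Sum>k\<in>V. (if j = u then Q k else 0)) = (\<Sum>j\<in>V. if j = u then sum Q V else 0)"
      by (rule sum.cong) auto
    also have "\<dots> = sum Q V" using assms by simp
    finally show ?thesis using assms by (simp add: sum.distrib)
  qed
  also have "(\<Sum>v\<in>V. Q v) = (\<Sum>v\<in>V. wE u v) * t\<^sup>2 - 2 * (\<Sum>v\<in>V. wE u v * (f v - f u)) * t"
    unfolding Q_def
    by (simp add: power2_eq_square algebra_simps sum_distrib_left sum_distrib_right
        sum_subtractf[symmetric] sum.distrib[symmetric])
  finally show ?thesis unfolding energy_def g_def by (simp add: algebra_simps)
qed

theorem theorem8:
  fixes V :: "'a set" and i :: 'a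
    and wE :: "'a \<Rightarrow> 'a \<Rightarrow> real" and wV :: "'a \<Rightarrow> real" and f :: "'a \<Rightarrow> real"
  assumes finV: "finite V" and iV: "i \<in> V"
    and wE_sym: "\<And>u v. wE u v = wE v u"
    and wE_nonneg: "\<And>u v. wE u v \<ge> 0"
    and no_loops: "\<And>u. wE u u = 0"
    and wV_nonneg: "\<And>u. u \<in> V \<Longrightarrow> wV u \<ge> 0"
    and wV_nonzero: "\<exists>u\<in>V. wV u \<noteq> 0"
    and conn: "pos_connected V wE"
    and conn_del: "pos_connected (V - {i}) wE"
    and sol: "is_solution V wE wV i f"
    and pos: "\<And>u. u \<in> V - {i} \<Longrightarrow> f u > 0"
  shows "\<forall>u \<in> V - {i}.
           (\<exists>u' \<in> nbrs V wE u. f u' \<le> f u) \<and>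
           (wV u > 0 \<longrightarrow> (\<exists>u' \<in> nbrs V wE u. f u' < f u))"
proof -
  have adm: "admissible V wV i f" and minE: "\<And>g. admissible V wV i g \<Longrightarrow> energy V wE f \<le> energy V wE g"
    using sol unfolding is_solution_def by auto
  have S1: "(\<Sum>w\<in>V. wV w * (f w)\<^sup>2) = 1"
    using adm unfolding admissible_def wnorm_def by simp
  have fi: "f i = 0" using adm unfolding admissible_def by simp
  define E0 where "E0 = energy V wE f"
  have E0nn: "E0 \<ge> 0" unfolding E0_def energy_def
    by (intro mult_nonneg_nonneg sum_nonneg) (auto intro: wE_nonneg)
  have E0pos: "E0 > 0"
  proof (rule ccontr)
    assume "\<not> E0 > 0"
    then have "(\<Sum>j\<in>V. \<Sum>k\<in>V. wE j k * (f k - f j)\<^sup>2) = 0"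
      using E0nn unfolding E0_def energy_def by simp
    then have z: "\<forall>j\<in>V. \<forall>k\<in>V. wE j k * (f k - f j)\<^sup>2 = 0"
      using finV by (subst (asm) sum_nonneg_eq_0_iff) (auto simp: sum_nonneg_eq_0_iff wE_nonneg sum_nonneg)
    have eq: "f a = f b" if "(a, b) \<in> (pos_edges V wE)\<^sup>*" for a b
      using that
    proof (induction rule: rtrancl_induct)
      case base then show ?case by simp
    next
      case (step y z')
      then have "y \<in> V" "z' \<in> V" "wE y z' > 0" unfolding pos_edges_def by auto
      with z have "f z' = f y" by fastforce
      with step show ?case by simp
    qed
    obtain u where "u \<in> V" "wV u \<noteq> 0" using wV_nonzero by blast
    have "u \<noteq> i"
    proof
      assume "u = i"
      have "(\<Sum>w\<in>V. wV w * (f w)\<^sup>2) = 0"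
      proof (rule sum.neutral, intro ballI)
        fix w assume "w \<in> V"
        then have "f w = f i" using eq conn iV unfolding pos_connected_def by metis
        then show "wV w * (f w)\<^sup>2 = 0" using fi by simp
      qed
      with S1 show False by simp
    qed
    with \<open>u \<in> V\<close> have "f u > 0" using pos by auto
    moreover have "f u = f i" using eq conn iV \<open>u \<in> V\<close> unfolding pos_connected_def by metis
    ultimately show False using fi by simp
  qed
  have key: "2 * E0 * wV u * f u + 2 * (\<Sum>v\<in>V. wE u v * (f v - f u)) \<le> 0"
    if uV: "u \<in> V - {i}" for u
  proof -
    define C where "C = (\<Sum>v\<in>V. wE u v * (f v - f u))"
    define S where "S = (\<Sum>v\<in>V. wE u v)"
    define K where "K = 2 * E0 * wV u * f u + 2 * C"
    have Snn: "S \<ge> 0" unfolding S_def by (simp add: sum_nonneg wE_nonneg)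
    have fu: "f u > 0" using pos uV by auto
    have wu: "wV u \<ge> 0" using wV_nonneg uV by auto
    have bound: "K \<le> S * t" if t: "t > 0" for t
    proof -
      define g where "g = f(u := f u + t)"
      define N where "N = 1 + wV u * (2 * f u * t + t\<^sup>2)"
      have N1: "N \<ge> 1" unfolding N_def using wu fu t by (intro add_increasing2 mult_nonneg_nonneg) auto
      have Npos: "N > 0" using N1 by simp
      have SN: "(\<Sum>w\<in>V. wV w * (g w)\<^sup>2) = N"
        unfolding g_def N_def using norm_upd[OF finV, of u wV f t] uV S1 by simp
      have "admissible V wV i (\<lambda>w. g w / sqrt N)"
        unfolding admissible_def using wnorm_scale[OF Npos SN] uV fi unfolding g_def by auto
      then have "E0 \<le> energy V wE g / N"
        using minE[of "\<lambda>w. g w / sqrt N"] energy_scale[OF Npos, of V wE g] unfolding E0_def by simp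
      then have "E0 * N \<le> energy V wE g" using Npos by (simp add: le_divide_eq)
      also have "energy V wE g = E0 + S * t\<^sup>2 - 2 * C * t"
        unfolding g_def E0_def S_def C_def
        using energy_upd[OF finV, of u wE f t] uV wE_sym no_loops by auto
      finally have "E0 * wV u * (2 * f u * t + t\<^sup>2) \<le> S * t\<^sup>2 - 2 * C * t"
        unfolding N_def by (simp add: algebra_simps)
      then have "t * (E0 * wV u * (2 * f u + t)) \<le> t * (S * t - 2 * C)"
        by (simp add: power2_eq_square algebra_simps)
      then have "E0 * wV u * (2 * f u + t) \<le> S * t - 2 * C"
        using t by simp
      moreover have "E0 * wV u * t \<ge> 0" using E0nn wu t by simp
      ultimately show ?thesis unfolding K_def by (simp add: algebra_simps)
    qed
    show ?thesis
    proof (rule ccontr)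
      assume "\<not> ?thesis"
      then have Kp: "K > 0" unfolding K_def C_def by simp
      have "K \<le> S * (K / (2 * S + 2))" using bound[of "K / (2 * S + 2)"] Kp Snn by simp
      also have "S * (K / (2 * S + 2)) < K"
      proof -
        have d: "2 * S + 2 > 0" using Snn by simp
        have "S * K < K * (2 * S + 2)"
        proof -
          have "K * (2 * S + 2) - S * K = K * (S + 2)" by (simp add: algebra_simps)
          also have "\<dots> > 0" using Kp Snn by (intro mult_pos_pos) auto
          finally show ?thesis by simp
        qed
        then have "(S * K) / (2 * S + 2) < K" by (subst pos_divide_less_eq[OF d]) simp
        then show ?thesis by simp
      qed
      finally show False by simp
    qed
  qed
  show ?thesis
  proof (intro ballI conjI impI)
    fix u assume uV: "u \<in> V - {i}"
    have k: "2 * E0 * wV u * f u + 2 * (\<Sum>v\<in>V. wE u v * (f v - f u)) \<le> 0" using key uV .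
    have fu: "f u > 0" using pos uV by auto
    have wu: "wV u \<ge> 0" using wV_nonneg uV by auto
    have "(u, i) \<in> (pos_edges V wE)\<^sup>*" using conn uV iV unfolding pos_connected_def by auto
    then obtain y where y: "(u, y) \<in> pos_edges V wE" using uV
      by (metis converse_rtranclE DiffD2 singletonI)
    then have yV: "y \<in> V" and wy: "wE u y > 0" unfolding pos_edges_def by auto
    show "\<exists>u' \<in> nbrs V wE u. f u' \<le> f u"
    proof (rule ccontr)
      assume A: "\<not> ?thesis"
      have nn: "\<forall>v\<in>V. 0 \<le> wE u v * (f v - f u)"
      proof
        fix v assume "v \<in> V"
        show "0 \<le> wE u v * (f v - f u)"
        proof (cases "wE u v > 0")
          case True then have "v \<in> nbrs V wE u" using \<open>v \<in> V\<close> unfolding nbrs_def by auto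
          with A True show ?thesis by force
        next
          case False then have "wE u v = 0" using wE_nonneg[of u v] by simp
          then show ?thesis by simp
        qed
      qed
      have "y \<in> nbrs V wE u" using yV wy unfolding nbrs_def by auto
      with A have "f y > f u" by force
      with wy have "0 < wE u y * (f y - f u)" by simp
      then have "0 < (\<Sum>v\<in>V. wE u v * (f v - f u))"
        by (rule sum_pos2[OF finV yV]) (use nn in auto)
      moreover have "0 \<le> 2 * E0 * wV u * f u" using E0nn wu fu by simp
      ultimately show False using k by simp
    qed
    assume wpos: "wV u > 0"
    show "\<exists>u' \<in> nbrs V wE u. f u' < f u"
    proof (rule ccontr)
      assume A: "\<not> ?thesis"
      have nn: "\<forall>v\<in>V. 0 \<le> wE u v * (f v - f u)"
      proof
        fix v assume "v \<in> V"
        show "0 \<le> wE u v * (f v - f u)"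
        proof (cases "wE u v > 0")
          case True then have "v \<in> nbrs V wE u" using \<open>v \<in> V\<close> unfolding nbrs_def by auto
          with A True show ?thesis by force
        next
          case False then have "wE u v = 0" using wE_nonneg[of u v] by simp
          then show ?thesis by simp
        qed
      qed
      then have "0 \<le> (\<Sum>v\<in>V. wE u v * (f v - f u))" by (simp add: sum_nonneg)
      moreover have "0 < 2 * E0 * wV u * f u" using E0pos wpos fu by simp
      ultimately show False using k by simp
    qed
  qed
qed

end
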